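(* Let $\mathcal{A}$ be a triangular algebra over a field $F$ with $\operatorname{char}(F)\neq2$. Then $\operatorname{QJDer}(\mathcal{A})=\operatorname{Cent}(\mathcal{A})+\operatorname{Der}(\mathcal{A})$.
   Context: A triangular algebra is an algebra of the form $\mathcal{A}=\begin{pmatrix}B & M\\ 0 & C\end{pmatrix}$ (formal matrix operations), where $B,C$ are unital algebras and $M$ is a $(B,C)$-bimodule that is faithful as a left $B$-module and as a right $C$-module. $x\circ y=xy+yx$. $\operatorname{QJDer}(\mathcal{A})$: linear $f:\mathcal{A}\to\mathcal{A}$ for which there is a linear $h$ with $f(x)\circ y+x\circ f(y)=h(x\circ y)$ for all $x,y$. $\operatorname{Cent}(\mathcal{A})$: linear $f$ with $f(xy)=f(x)y=xf(y)$. $\operatorname{Der}(\mathcal{A})$: linear $d$ with $d(xy)=d(x)y+xd(y)$. Sums of sets of maps are sets of pointwise sums. *)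

theory Defs
  imports Main "HOL-Library.Product_Plus"
begin

definition is_module :: "('f::field \<Rightarrow> 'v::ab_group_add \<Rightarrow> 'v) \<Rightarrow> bool" where
  "is_module sm \<longleftrightarrow>
     (\<forall>a x y. sm a (x + y) = sm a x + sm a y) \<and>
     (\<forall>a b x. sm (a + b) x = sm a x + sm b x) \<and>
     (\<forall>a b x. sm (a * b) x = sm a (sm b x)) \<and>
     (\<forall>x. sm 1 x = x)"

definition is_unital_algebra :: "('f::field \<Rightarrow> 'b::ring_1 \<Rightarrow> 'b) \<Rightarrow> bool" where
  "is_unital_algebra sm \<longleftrightarrow> is_module sm \<and>
     (\<forall>a x y. sm a (x * y) = sm a x * y \<and> sm a (x * y) = x * sm a y)"

definition is_bimodule ::
  "('f::field \<Rightarrow> 'b::ring_1 \<Rightarrow> 'b) \<Rightarrow> ('f \<Rightarrow> 'm::ab_group_add \<Rightarrow> 'm) \<Rightarrow> ('f \<Rightarrow> 'c::ring_1 \<Rightarrow> 'c)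
   \<Rightarrow> ('b \<Rightarrow> 'm \<Rightarrow> 'm) \<Rightarrow> ('m \<Rightarrow> 'c \<Rightarrow> 'm) \<Rightarrow> bool" where
  "is_bimodule smB smM smC la ra \<longleftrightarrow> is_module smM \<and>
     (\<forall>b1 b2 m. la (b1 + b2) m = la b1 m + la b2 m) \<and>
     (\<forall>b m1 m2. la b (m1 + m2) = la b m1 + la b m2) \<and>
     (\<forall>b1 b2 m. la (b1 * b2) m = la b1 (la b2 m)) \<and>
     (\<forall>m. la 1 m = m) \<and>
     (\<forall>m c1 c2. ra m (c1 + c2) = ra m c1 + ra m c2) \<and>
     (\<forall>m1 m2 c. ra (m1 + m2) c = ra m1 c + ra m2 c) \<and>
     (\<forall>m c1 c2. ra m (c1 * c2) = ra (ra m c1) c2) \<and>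
     (\<forall>m. ra m 1 = m) \<and>
     (\<forall>b m c. la b (ra m c) = ra (la b m) c) \<and>
     (\<forall>a b m. smM a (la b m) = la (smB a b) m \<and> smM a (la b m) = la b (smM a m)) \<and>
     (\<forall>a m c. smM a (ra m c) = ra (smM a m) c \<and> smM a (ra m c) = ra m (smC a c))"

definition faithful_left :: "('b::ring_1 \<Rightarrow> 'm::ab_group_add \<Rightarrow> 'm) \<Rightarrow> bool" where
  "faithful_left la \<longleftrightarrow> (\<forall>b. (\<forall>m. la b m = 0) \<longrightarrow> b = 0)"

definition faithful_right :: "('m::ab_group_add \<Rightarrow> 'c::ring_1 \<Rightarrow> 'm) \<Rightarrow> bool" where
  "faithful_right ra \<longleftrightarrow> (\<forall>c. (\<forall>m. ra m c = 0) \<longrightarrow> c = 0)"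

(* The triangular algebra [[B, M],[0, C]] realised on B \<times> M \<times> C with componentwise addition *)
definition tri_mult :: "('b::ring_1 \<Rightarrow> 'm::ab_group_add \<Rightarrow> 'm) \<Rightarrow> ('m \<Rightarrow> 'c::ring_1 \<Rightarrow> 'm)
    \<Rightarrow> 'b \<times> 'm \<times> 'c \<Rightarrow> 'b \<times> 'm \<times> 'c \<Rightarrow> 'b \<times> 'm \<times> 'c" where
  "tri_mult la ra x y = (case x of (b1, m1, c1) \<Rightarrow> case y of (b2, m2, c2) \<Rightarrow>
      (b1 * b2, la b1 m2 + ra m1 c2, c1 * c2))"

definition tri_smul :: "('f::field \<Rightarrow> 'b \<Rightarrow> 'b) \<Rightarrow> ('f \<Rightarrow> 'm \<Rightarrow> 'm) \<Rightarrow> ('f \<Rightarrow> 'c \<Rightarrow> 'c)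
    \<Rightarrow> 'f \<Rightarrow> 'b \<times> 'm \<times> 'c \<Rightarrow> 'b \<times> 'm \<times> 'c" where
  "tri_smul smB smM smC a x = (case x of (b, m, c) \<Rightarrow> (smB a b, smM a m, smC a c))"

definition lin_map :: "('f \<Rightarrow> 'a::ab_group_add \<Rightarrow> 'a) \<Rightarrow> ('a \<Rightarrow> 'a) \<Rightarrow> bool" where
  "lin_map sm f \<longleftrightarrow> (\<forall>x y. f (x + y) = f x + f y) \<and> (\<forall>a x. f (sm a x) = sm a (f x))"

definition jordan_prod :: "('a \<Rightarrow> 'a \<Rightarrow> 'a::ab_group_add) \<Rightarrow> 'a \<Rightarrow> 'a \<Rightarrow> 'a" where
  "jordan_prod mult x y = mult x y + mult y x"

definition QJDer :: "('f \<Rightarrow> 'a::ab_group_add \<Rightarrow> 'a) \<Rightarrow> ('a \<Rightarrow> 'a \<Rightarrow> 'a) \<Rightarrow> ('a \<Rightarrow> 'a) set" where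
  "QJDer sm mult = {f. lin_map sm f \<and> (\<exists>h. lin_map sm h \<and>
      (\<forall>x y. jordan_prod mult (f x) y + jordan_prod mult x (f y) = h (jordan_prod mult x y)))}"

definition Cent :: "('f \<Rightarrow> 'a::ab_group_add \<Rightarrow> 'a) \<Rightarrow> ('a \<Rightarrow> 'a \<Rightarrow> 'a) \<Rightarrow> ('a \<Rightarrow> 'a) set" where
  "Cent sm mult = {f. lin_map sm f \<and>
      (\<forall>x y. f (mult x y) = mult (f x) y \<and> f (mult x y) = mult x (f y))}"

definition Der :: "('f \<Rightarrow> 'a::ab_group_add \<Rightarrow> 'a) \<Rightarrow> ('a \<Rightarrow> 'a \<Rightarrow> 'a) \<Rightarrow> ('a \<Rightarrow> 'a) set" where
  "Der sm mult = {d. lin_map sm d \<and> (\<forall>x y. d (mult x y) = mult (d x) y + mult x (d y))}"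

definition map_set_sum :: "('a \<Rightarrow> 'a::ab_group_add) set \<Rightarrow> ('a \<Rightarrow> 'a) set \<Rightarrow> ('a \<Rightarrow> 'a) set" where
  "map_set_sum S T = {(\<lambda>x. f x + g x) | f g. f \<in> S \<and> g \<in> T}"

end

theory Submission
  imports Defs
begin


lemma two_ne_zero_field:
  assumes "CHAR('f::field) \<noteq> 2" shows "(2::'f) \<noteq> 0"
proof
  assume "(2::'f) = 0"
  hence "of_nat 2 = (0::'f)" by simp
  hence d: "CHAR('f) dvd 2" by (simp only: of_nat_eq_0_iff_char_dvd)
  hence "CHAR('f) \<le> 2" by (rule dvd_imp_le) simp
  moreover have "CHAR('f) \<noteq> 0" using d by (metis dvd_0_left_iff zero_neq_numeral)
  moreover have "CHAR('f) \<noteq> Suc 0" by (rule CHAR_not_1)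
  ultimately show False using assms by linarith
qed

lemma module_two_torsion:
  fixes sm :: "'f::field \<Rightarrow> 'v::ab_group_add \<Rightarrow> 'v" and x :: 'v
  assumes "is_module sm" "(2::'f) \<noteq> 0" "x + x = 0"
  shows "x = 0"
proof -
  have "sm 2 x = x + x" using assms(1) unfolding is_module_def
    by (metis one_add_one)
  moreover have "sm a 0 = 0" for a using assms(1) unfolding is_module_def
    by (metis add_cancel_right_right)
  ultimately have "sm (1/2) (sm 2 x) = 0" using assms(3) by simp
  moreover have "sm (1/2) (sm 2 x) = x" using assms(1,2) unfolding is_module_def
    by (metis divide_self_if times_divide_eq_left mult_1)
  ultimately show ?thesis by simp
qed


locale tri =
  fixes smB :: "'f::field \<Rightarrow> 'b::ring_1 \<Rightarrow> 'b"
    and smM :: "'f \<Rightarrow> 'm::ab_group_add \<Rightarrow> 'm"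
    and smC :: "'f \<Rightarrow> 'c::ring_1 \<Rightarrow> 'c"
    and la :: "'b \<Rightarrow> 'm \<Rightarrow> 'm"
    and ra :: "'m \<Rightarrow> 'c \<Rightarrow> 'm"
  assumes char: "CHAR('f) \<noteq> 2"
    and algB: "is_unital_algebra smB"
    and algC: "is_unital_algebra smC"
    and bim: "is_bimodule smB smM smC la ra"
    and fl: "faithful_left la"
    and fr: "faithful_right ra"
begin

lemma la_addL[simp]: "la (b1 + b2) m = la b1 m + la b2 m" using bim unfolding is_bimodule_def by simp
lemma la_addR[simp]: "la b (m1 + m2) = la b m1 + la b m2" using bim unfolding is_bimodule_def by simp
lemma la_mult: "la (b1 * b2) m = la b1 (la b2 m)" using bim unfolding is_bimodule_def by simp
lemma la_one[simp]: "la 1 m = m" using bim unfolding is_bimodule_def by simp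
lemma ra_addR[simp]: "ra m (c1 + c2) = ra m c1 + ra m c2" using bim unfolding is_bimodule_def by simp
lemma ra_addL[simp]: "ra (m1 + m2) c = ra m1 c + ra m2 c" using bim unfolding is_bimodule_def by simp
lemma ra_mult: "ra m (c1 * c2) = ra (ra m c1) c2" using bim unfolding is_bimodule_def by simp
lemma ra_one[simp]: "ra m 1 = m" using bim unfolding is_bimodule_def by simp
lemma la_ra: "la b (ra m c) = ra (la b m) c" using bim unfolding is_bimodule_def by simp
lemma la_zeroL[simp]: "la 0 m = 0"
proof -
  have e: "la 0 m = la 0 m + la 0 m" using la_addL[of 0 0 m] by (simp only: add_0)
  show ?thesis using e by (simp only: add_cancel_right_right)
qed
lemma la_zeroR[simp]: "la b 0 = 0"
proof -
  have e: "la b 0 = la b 0 + la b 0" using la_addR[of b 0 0] by (simp only: add_0)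
  show ?thesis using e by (simp only: add_cancel_right_right)
qed
lemma ra_zeroL[simp]: "ra 0 c = 0"
proof -
  have e: "ra 0 c = ra 0 c + ra 0 c" using ra_addL[of 0 0 c] by (simp only: add_0)
  show ?thesis using e by (simp only: add_cancel_right_right)
qed
lemma ra_zeroR[simp]: "ra m 0 = 0"
proof -
  have e: "ra m 0 = ra m 0 + ra m 0" using ra_addR[of m 0 0] by (simp only: add_0)
  show ?thesis using e by (simp only: add_cancel_right_right)
qed
lemma la_minusL[simp]: "la (- b) m = - la b m"
proof -
  have "la (- b) m + la b m = 0" using la_addL[of "-b" b m, symmetric] by simp
  thus ?thesis by (simp add: eq_neg_iff_add_eq_0)
qed
lemma la_minusR[simp]: "la b (- m) = - la b m"
proof -
  have "la b (- m) + la b m = 0" using la_addR[of b "-m" m, symmetric] by simp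
  thus ?thesis by (simp add: eq_neg_iff_add_eq_0)
qed
lemma ra_minusL[simp]: "ra (- m) c = - ra m c"
proof -
  have "ra (- m) c + ra m c = 0" using ra_addL[of "-m" m c, symmetric] by simp
  thus ?thesis by (simp add: eq_neg_iff_add_eq_0)
qed
lemma ra_minusR[simp]: "ra m (- c) = - ra m c"
proof -
  have "ra m (- c) + ra m c = 0" using ra_addR[of m "-c" c, symmetric] by simp
  thus ?thesis by (simp add: eq_neg_iff_add_eq_0)
qed
lemma la_diffL[simp]: "la (b1 - b2) m = la b1 m - la b2 m" by (simp only: diff_conv_add_uminus la_addL la_addR ra_addL ra_addR la_minusL la_minusR ra_minusL ra_minusR)
lemma la_diffR[simp]: "la b (m1 - m2) = la b m1 - la b m2" by (simp only: diff_conv_add_uminus la_addL la_addR ra_addL ra_addR la_minusL la_minusR ra_minusL ra_minusR)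
lemma ra_diffL[simp]: "ra (m1 - m2) c = ra m1 c - ra m2 c" by (simp only: diff_conv_add_uminus la_addL la_addR ra_addL ra_addR la_minusL la_minusR ra_minusL ra_minusR)
lemma ra_diffR[simp]: "ra m (c1 - c2) = ra m c1 - ra m c2" by (simp only: diff_conv_add_uminus la_addL la_addR ra_addL ra_addR la_minusL la_minusR ra_minusL ra_minusR)

lemma two: "(2::'f) \<noteq> 0" using two_ne_zero_field[OF char] .
lemma modBm: "is_module smB" using algB unfolding is_unital_algebra_def by (rule conjunct1)
lemma modCm: "is_module smC" using algC unfolding is_unital_algebra_def by (rule conjunct1)
lemma modMm: "is_module smM" using bim unfolding is_bimodule_def by (rule conjunct1)
lemma ttB: "(x::'b) + x = 0 \<Longrightarrow> x = 0" by (rule module_two_torsion[OF modBm two])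
lemma ttC: "(x::'c) + x = 0 \<Longrightarrow> x = 0" by (rule module_two_torsion[OF modCm two])
lemma ttM: "(x::'m) + x = 0 \<Longrightarrow> x = 0" by (rule module_two_torsion[OF modMm two])

abbreviation "S \<equiv> tri_smul smB smM smC"
abbreviation "Mu \<equiv> tri_mult la ra"
abbreviation "jp \<equiv> jordan_prod Mu"

lemma mu_tr[simp]: "Mu (b,m,c) (b',m',c') = (b*b', la b m' + ra m c', c*c')"
  by (simp add: tri_mult_def)
lemma jp_tr[simp]: "jp (b,m,c) (b',m',c') = (b*b'+b'*b, la b m' + ra m c' + (la b' m + ra m' c), c*c'+c'*c)"
  by (simp add: jordan_prod_def)

end



context tri begin

lemma lin_add: "lin_map S g \<Longrightarrow> g (x + y) = g x + g y" unfolding lin_map_def by blast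

lemma modB: "smB a (x + y) = smB a x + smB a y" using modBm unfolding is_module_def by blast
lemma modC: "smC a (x + y) = smC a x + smC a y" using modCm unfolding is_module_def by blast
lemma modM: "smM a (x + y) = smM a x + smM a y" using modMm unfolding is_module_def by blast
lemma modB_diff: "smB a (x - y) = smB a x - smB a y" by (metis diff_add_cancel eq_diff_eq modB)
lemma modC_diff: "smC a (x - y) = smC a x - smC a y" by (metis diff_add_cancel eq_diff_eq modC)
lemma modM_diff: "smM a (x - y) = smM a x - smM a y" by (metis diff_add_cancel eq_diff_eq modM)
lemma S_add: "S a (x + y) = S a x + S a y"
  by (cases x; cases y) (simp add: tri_smul_def modB modC modM)
lemma S_diff: "S a (x - y) = S a x - S a y"
  by (cases x; cases y) (simp add: tri_smul_def modB_diff modC_diff modM_diff)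
lemma algB1: "smB a (x * y) = x * smB a y" using algB unfolding is_unital_algebra_def by blast
lemma algC1: "smC a (x * y) = x * smC a y" using algC unfolding is_unital_algebra_def by blast
lemma bimL: "smM a (la b m) = la b (smM a m)"
proof -
  have "\<forall>a b m. smM a (la b m) = la (smB a b) m \<and> smM a (la b m) = la b (smM a m)"
    using bim unfolding is_bimodule_def by (elim conjE) assumption
  thus ?thesis by blast
qed
lemma bimR: "smM a (ra m c) = ra (smM a m) c"
proof -
  have "\<forall>a m c. smM a (ra m c) = ra (smM a m) c \<and> smM a (ra m c) = ra m (smC a c)"
    using bim unfolding is_bimodule_def by (elim conjE) assumption
  thus ?thesis by blast
qed
lemma lin_zero: "lin_map S g \<Longrightarrow> g 0 = 0" using lin_add[of g 0 0] by simp

lemma qjder_sub: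
  assumes lf: "lin_map S f" and lh: "lin_map S h"
    and P: "\<And>x y. jp (f x) y + jp x (f y) = h (jp x y)"
  shows "\<exists>c d. c \<in> Cent S Mu \<and> d \<in> Der S Mu \<and> f = (\<lambda>x. c x + d x)"
proof -
  have fadd: "\<And>x y. f (x+y) = f x + f y" using lf unfolding lin_map_def by blast
  have fsm: "\<And>a x. f (S a x) = S a (f x)" using lf unfolding lin_map_def by blast
  have h0: "h 0 = 0" using lin_zero[OF lh] .
  define b1 where "b1 = fst (f (1,0,0))"
  define m1 where "m1 = fst (snd (f (1,0,0)))"
  define c1 where "c1 = snd (snd (f (1,0,0)))"
  define b2 where "b2 = fst (f (0,0,1))"
  define m2 where "m2 = fst (snd (f (0,0,1)))"
  define c2 where "c2 = snd (snd (f (0,0,1)))"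
  have fE0: "f (1,0,0) = (b1,m1,c1)" by (simp add: b1_def m1_def c1_def)
  have fE': "f (0,0,1) = (b2,m2,c2)" by (simp add: b2_def m2_def c2_def)
  have "jp (f (1,0,0)) (0,0,1) + jp (1,0,0) (f (0,0,1)) = 0"
    using P[of "(1,0,0)" "(0,0,1)"] h0 by (simp add: zero_prod_def)
  hence e1: "b2 + b2 = 0 \<and> m1 + m2 = 0 \<and> c1 + c1 = 0" by (simp add: fE0 fE' zero_prod_def)
  have b20: "b2 = 0" using e1 ttB by blast
  have c10: "c1 = 0" using e1 ttC by blast
  have m2m: "m2 = - m1" using e1 by (simp add: eq_neg_iff_add_eq_0 add.commute)
  have fE: "f (1,0,0) = (b1,m1,0)" using fE0 c10 by simp
  have fE'': "f (0,0,1) = (0,-m1,c2)" using fE' b20 m2m by simp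
  define p where "p b = fst (f (b,0,0))" for b
  define r where "r c = snd (snd (f (0,0,c)))" for c
  define mu where "mu m = fst (snd (f (0,m,0)))" for m
  have KB: "f (b,0,0) = (p b, la b m1, 0)" for b
  proof -
    obtain q s where fb: "f (b,0,0) = (p b, q, s)" unfolding p_def by (metis prod.collapse)
    have "jp (f (0,0,1)) (b,0,0) + jp (0,0,1) (f (b,0,0)) = 0"
      using P[of "(0,0,1)" "(b,0,0)"] h0 by (simp add: zero_prod_def)
    hence "- la b m1 + q = 0 \<and> s + s = 0" by (simp add: fE'' fb zero_prod_def)
    thus ?thesis using fb ttC by (metis add.commute eq_neg_iff_add_eq_0 minus_minus)
  qed
  have KC: "f (0,0,c) = (0, - ra m1 c, r c)" for c
  proof -
    obtain q s where fc: "f (0,0,c) = (s, q, r c)" unfolding r_def by (metis prod.collapse)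
    have "jp (f (1,0,0)) (0,0,c) + jp (1,0,0) (f (0,0,c)) = 0"
      using P[of "(1,0,0)" "(0,0,c)"] h0 by (simp add: zero_prod_def)
    hence "s + s = 0 \<and> ra m1 c + q = 0" by (simp add: fE fc zero_prod_def)
    thus ?thesis using fc ttB by (metis add.commute eq_neg_iff_add_eq_0)
  qed
  have KM: "f (0,m,0) = (0, mu m, 0) \<and> la b1 m = ra m c2" for m
  proof -
    obtain s t where fm: "f (0,m,0) = (s, mu m, t)" unfolding mu_def by (metis prod.collapse)
    have "jp (f (1,0,0)) (0,m,0) + jp (1,0,0) (f (0,m,0)) = jp (f (0,0,1)) (0,m,0) + jp (0,0,1) (f (0,m,0))"
      using P[of "(1,0,0)" "(0,m,0)"] P[of "(0,0,1)" "(0,m,0)"] by simp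
    hence "s + s = 0 \<and> la b1 m + mu m = ra m c2 + mu m \<and> 0 = t + t" by (simp add: fE fE'' fm)
    thus ?thesis using fm ttB ttC by (metis add_right_cancel)
  qed
  have K4: "la b1 m = ra m c2" for m using KM by blast
  have KM': "f (0,m,0) = (0, mu m, 0)" for m using KM by blast
  have hM: "h (0,m,0) = (0, la b1 m + mu m, 0)" for m
    using P[of "(1,0,0)" "(0,m,0)"] by (simp add: fE KM')
  have K0: "f (b,m,c) = (p b, la b m1 + mu m - ra m1 c, r c)" for b m c
  proof -
    have "(b,m,c) = (b,0,0) + (0,m,0) + (0,0,c)" by simp
    hence "f (b,m,c) = f (b,0,0) + f (0,m,0) + f (0,0,c)" by (metis fadd)
    thus ?thesis by (simp add: KB KM' KC)
  qed
  have muadd: "mu (m + m') = mu m + mu m'" for m m'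
  proof -
    have "f (0, m+m', 0) = f (0,m,0) + f (0,m',0)" using fadd[of "(0,m,0)" "(0,m',0)"] by simp
    thus ?thesis by (simp add: KM')
  qed
  have K5: "la (p b) m + la b (mu m) = la b1 (la b m) + mu (la b m)" for b m
    using P[of "(b,0,0)" "(0,m,0)"] by (simp add: KB KM' hM)
  have K6: "ra (mu m) c + ra m (r c) = la b1 (ra m c) + mu (ra m c)" for m c
    using P[of "(0,m,0)" "(0,0,c)"] by (simp add: KC KM' hM)
  have b1c: "b1 * b = b * b1" for b
  proof -
    have "\<forall>m. la (b1 * b - b * b1) m = 0" (is "\<forall>m. la ?X m = 0") by (simp add: la_mult K4 la_ra)
    hence "?X = 0" using fl unfolding faithful_left_def by blast
    thus ?thesis by simp
  qed
  have c2c: "c2 * c = c * c2" for c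
  proof -
    have "\<forall>m. ra m (c2 * c - c * c2) = 0" (is "\<forall>m. ra m ?X = 0") by (simp add: ra_mult flip: K4 la_ra)
    hence "?X = 0" using fr unfolding faithful_right_def by blast
    thus ?thesis by simp
  qed
  have K5': "mu (la b m) = la (p b) m + la b (mu m) - la b1 (la b m)" for b m
    using K5[of b m] by (simp add: algebra_simps)
  have K6': "mu (ra m c) = ra (mu m) c + ra m (r c) - la b1 (ra m c)" for m c
    using K6[of m c] by (simp add: algebra_simps)
  have K7: "p (b * b') = p b * b' + b * p b' - b * b1 * b'" for b b'
  proof -
    have "\<forall>m. la (p (b * b')) m = la (p b * b' + b * p b' - b * b1 * b') m"
    proof
      fix m
      have "la (p (b * b')) m = mu (la (b*b') m) - la (b*b') (mu m) + la b1 (la (b*b') m)"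
        using K5'[of "b*b'" m] by (simp add: algebra_simps)
      also have "\<dots> = la (p b * b' + b * p b' - b * b1 * b') m"
        by (simp add: la_mult K5' muadd algebra_simps)
      finally show "la (p (b * b')) m = la (p b * b' + b * p b' - b * b1 * b') m" .
    qed
    hence "\<forall>m. la (p (b * b') - (p b * b' + b * p b' - b * b1 * b')) m = 0" (is "\<forall>m. la ?X m = 0") by simp
    hence "?X = 0" using fl unfolding faithful_left_def by blast
    thus ?thesis by simp
  qed
  have K8: "r (c * c') = r c * c' + c * r c' - c2 * c * c'" for c c'
  proof -
    have "\<forall>m. ra m (r (c * c')) = ra m (r c * c' + c * r c' - c2 * c * c')"
    proof
      fix m
      have "ra m (r (c * c')) = mu (ra m (c*c')) - ra (mu m) (c*c') + la b1 (ra m (c*c'))"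
        using K6'[of m "c*c'"] by (simp add: algebra_simps)
      also have "\<dots> = ra m (r c * c' + c * r c' - c2 * c * c')"
        by (simp add: ra_mult K6' muadd la_ra K4 algebra_simps)
      finally show "ra m (r (c * c')) = ra m (r c * c' + c * r c' - c2 * c * c')" .
    qed
    hence "\<forall>m. ra m (r (c * c') - (r c * c' + c * r c' - c2 * c * c')) = 0" (is "\<forall>m. ra m ?X = 0") by simp
    hence "?X = 0" using fr unfolding faithful_right_def by blast
    thus ?thesis by simp
  qed
  define cz where "cz x = Mu (b1,0,c2) x" for x
  define d where "d x = f x - cz x" for x
  have czadd: "cz (x + y) = cz x + cz y" for x y
    by (cases x; cases y) (simp add: cz_def distrib_left)
  have czsm: "cz (S a x) = S a (cz x)" for a x
    by (cases x) (simp add: cz_def tri_smul_def algB1 algC1 bimL)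
  have czm1: "cz (Mu x y) = Mu (cz x) y" for x y
    by (cases x; cases y) (simp add: cz_def la_mult la_ra mult.assoc)
  have czm2: "cz (Mu x y) = Mu x (cz y)" for x y
  proof -
    obtain b m c where x: "x = (b,m,c)" by (metis prod.collapse)
    obtain b' m' c' where y: "y = (b',m',c')" by (metis prod.collapse)
    have 1: "b1 * (b * b') = b * (b1 * b')" by (metis b1c mult.assoc)
    have 2: "c2 * (c * c') = c * (c2 * c')" by (metis c2c mult.assoc)
    have 3: "la b1 (la b m') = la b (la b1 m')" by (metis b1c la_mult)
    have 4: "la b1 (ra m c') = ra m (c2 * c')" by (simp add: la_ra K4 ra_mult)
    show ?thesis by (simp add: x y cz_def 1 2 3 4)
  qed
  have cent: "cz \<in> Cent S Mu"
    unfolding Cent_def lin_map_def using czadd czsm czm1 czm2 by auto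
  have dlin: "lin_map S d"
    unfolding lin_map_def d_def by (simp add: fadd czadd czsm fsm S_diff)
  have dder: "d (Mu x y) = Mu (d x) y + Mu x (d y)" for x y
  proof -
    obtain b m c where x: "x = (b,m,c)" by (metis prod.collapse)
    obtain b' m' c' where y: "y = (b',m',c')" by (metis prod.collapse)
    have df: "d (b,m,c) = (p b - b1*b, la b m1 + mu m - ra m1 c - la b1 m, r c - c2*c)" for b m c
      by (simp add: d_def cz_def K0)
    have cB: "p (b*b') - b1*(b*b') = (p b - b1*b) * b' + b * (p b' - b1*b')"
      by (simp add: K7 algebra_simps)
    have cC: "r (c*c') - c2*(c*c') = (r c - c2*c) * c' + c * (r c' - c2*c')"
      by (simp add: K8 algebra_simps c2c)
    have cM: "la (b*b') m1 + mu (la b m' + ra m c') - ra m1 (c*c') - la b1 (la b m' + ra m c')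
      = la (p b - b1*b) m' + ra (la b m1 + mu m - ra m1 c - la b1 m) c'
        + (la b (la b' m1 + mu m' - ra m1 c' - la b1 m') + ra m (r c' - c2*c'))"
    proof -
      have A1: "la (b*b') m1 = la b (la b' m1)" by (rule la_mult)
      have A2: "ra m1 (c*c') = ra (ra m1 c) c'" by (rule ra_mult)
      have A3: "la b1 (la b m') = la b (la b1 m')" by (metis b1c la_mult)
      have A3': "la (b1*b) m' = la b (la b1 m')" by (metis b1c la_mult)
      have A4: "la b1 (ra m c') = ra (la b1 m) c'" by (rule la_ra)
      have A5: "ra m (c2*c') = ra (la b1 m) c'" by (simp add: K4 ra_mult)
      have A6: "ra (la b m1) c' = la b (ra m1 c')" by (rule la_ra[symmetric])
      have A7: "mu (la b m' + ra m c') = la (p b) m' + la b (mu m') - la b1 (la b m')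
                 + (ra (mu m) c' + ra m (r c') - la b1 (ra m c'))"
        by (simp only: muadd K5' K6')
      show ?thesis unfolding A7 by (simp add: A1 A2 A3 A3' A4 A5 A6 algebra_simps)
    qed
    show ?thesis unfolding x y by (simp only: mu_tr df add_Pair cB cC cM)
  qed
  have der: "d \<in> Der S Mu" unfolding Der_def using dlin dder by auto
  have "f = (\<lambda>x. cz x + d x)" by (simp add: d_def)
  thus ?thesis using cent der by blast
qed

lemma Mu_addL: "Mu (u + v) y = Mu u y + Mu v y"
  by (cases u; cases v; cases y) (simp add: distrib_right algebra_simps)
lemma Mu_addR: "Mu y (u + v) = Mu y u + Mu y v"
  by (cases u; cases v; cases y) (simp add: distrib_left algebra_simps)

lemma sum_sub:
  assumes c: "c \<in> Cent S Mu" and d: "d \<in> Der S Mu"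
  shows "(\<lambda>x. c x + d x) \<in> QJDer S Mu"
proof -
  have cc: "lin_map S c \<and> (\<forall>x y. c (Mu x y) = Mu (c x) y \<and> c (Mu x y) = Mu x (c y))"
    using c unfolding Cent_def by blast
  have cl: "lin_map S c" and c1: "\<And>x y. Mu (c x) y = c (Mu x y)" and c2: "\<And>x y. Mu x (c y) = c (Mu x y)"
    using cc by metis+
  have dl: "lin_map S d" and d1: "\<And>x y. d (Mu x y) = Mu (d x) y + Mu x (d y)"
    using d unfolding Der_def by auto
  have ca: "\<And>x y. c (x + y) = c x + c y" and cs: "\<And>a x. c (S a x) = S a (c x)" using cl unfolding lin_map_def by auto
  have da: "\<And>x y. d (x + y) = d x + d y" and ds: "\<And>a x. d (S a x) = S a (d x)" using dl unfolding lin_map_def by auto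
  define h where "h x = c x + c x + d x" for x
  have hl: "lin_map S h" unfolding lin_map_def h_def by (simp add: ca da cs ds S_add algebra_simps)
  have fl': "lin_map S (\<lambda>x. c x + d x)" unfolding lin_map_def by (simp add: ca da cs ds S_add algebra_simps)
  have "jp (c x + d x) y + jp x (c y + d y) = h (jp x y)" for x y
    unfolding jordan_prod_def h_def by (simp add: Mu_addL Mu_addR c1 c2 d1 ca da algebra_simps)
  thus ?thesis unfolding QJDer_def using hl fl' by blast
qed

lemma main: "QJDer S Mu = map_set_sum (Cent S Mu) (Der S Mu)"
proof
  show "QJDer S Mu \<subseteq> map_set_sum (Cent S Mu) (Der S Mu)"
  proof
    fix f assume "f \<in> QJDer S Mu"
    then obtain h where "lin_map S f" "lin_map S h" "\<And>x y. jp (f x) y + jp x (f y) = h (jp x y)"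
      unfolding QJDer_def by blast
    from qjder_sub[OF this] show "f \<in> map_set_sum (Cent S Mu) (Der S Mu)"
      unfolding map_set_sum_def by blast
  qed
next
  show "map_set_sum (Cent S Mu) (Der S Mu) \<subseteq> QJDer S Mu"
    unfolding map_set_sum_def using sum_sub by blast
qed

end

theorem corollary4p5:
  fixes smB :: "'f::field \<Rightarrow> 'b::ring_1 \<Rightarrow> 'b"
    and smM :: "'f \<Rightarrow> 'm::ab_group_add \<Rightarrow> 'm"
    and smC :: "'f \<Rightarrow> 'c::ring_1 \<Rightarrow> 'c"
    and la :: "'b \<Rightarrow> 'm \<Rightarrow> 'm"
    and ra :: "'m \<Rightarrow> 'c \<Rightarrow> 'm"
  assumes "CHAR('f) \<noteq> 2"
    and "is_unital_algebra smB"
    and "is_unital_algebra smC"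
    and "is_bimodule smB smM smC la ra"
    and "faithful_left la"
    and "faithful_right ra"
  shows "QJDer (tri_smul smB smM smC) (tri_mult la ra)
       = map_set_sum (Cent (tri_smul smB smM smC) (tri_mult la ra))
                     (Der (tri_smul smB smM smC) (tri_mult la ra))"
proof -
  interpret tri smB smM smC la ra using assms by (unfold_locales)
  show ?thesis by (rule main)
qed

end
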